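(* Let $\rho_Z>0$, $p_Z\in\mathbb R$, $K_Z>0$, and set $p_{\infty,Z}=K_Z-p_Z$ and $c_Z=\sqrt{K_Z/\rho_Z}$. Define, for $p>-p_{\infty,Z}$, $$f^{\mathrm{exp}}_Z(p)=c_Z\log\Big(\frac{p+p_{\infty,Z}}{K_Z}\Big),\qquad f^{\mathrm{shock}}_Z(p)=\frac{p-p_Z}{\sqrt{\rho_Z(p+p_{\infty,Z})}}.$$ Then $f^{\mathrm{shock}}_Z(p)\ge f^{\mathrm{exp}}_Z(p)$ for all $p>p_Z$. *)

theory Defs
  imports Complex_Main
begin

definition p_inf :: "real \<Rightarrow> real \<Rightarrow> real" where
  "p_inf pZ KZ = KZ - pZ"

definition c_snd :: "real \<Rightarrow> real \<Rightarrow> real" where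
  "c_snd rhoZ KZ = sqrt (KZ / rhoZ)"

definition f_exp :: "real \<Rightarrow> real \<Rightarrow> real \<Rightarrow> real \<Rightarrow> real" where
  "f_exp rhoZ pZ KZ p = c_snd rhoZ KZ * ln ((p + p_inf pZ KZ) / KZ)"

definition f_shock :: "real \<Rightarrow> real \<Rightarrow> real \<Rightarrow> real \<Rightarrow> real" where
  "f_shock rhoZ pZ KZ p = (p - pZ) / sqrt (rhoZ * (p + p_inf pZ KZ))"

end

theory Submission
  imports Defs
begin

lemma key: fixes t :: real assumes "t \<ge> 1" shows "2 * ln t \<le> t - 1 / t"
proof -
  let ?g = "\<lambda>t::real. t - 1 / t - 2 * ln t"
  have "?g 1 \<le> ?g t"
  proof (rule DERIV_nonneg_imp_increasing_open[OF assms])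
    show "continuous_on {1..t} ?g"
      by (intro continuous_intros) auto
  next
    fix x :: real assume x: "1 < x" "x < t"
    have "DERIV ?g x :> 1 + 1 / x^2 - 2 * (1 / x)"
      using x by (auto intro!: derivative_eq_intros simp: power2_eq_square field_simps)
    moreover have "1 + 1 / x^2 - 2 * (1 / x) \<ge> 0"
    proof -
      have "1 + 1 / x^2 - 2 * (1 / x) = (x - 1)^2 / x^2" using x by (simp add: field_simps power2_eq_square)
      thus ?thesis by simp
    qed
    ultimately show "\<exists>y. DERIV ?g x :> y \<and> 0 \<le> y" by blast
  qed
  thus ?thesis by simp
qed

theorem lemmaB1:
  fixes rhoZ pZ KZ p :: real
  assumes "rhoZ > 0" and "KZ > 0" and "p > pZ"
  shows "f_shock rhoZ pZ KZ p \<ge> f_exp rhoZ pZ KZ p"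
proof -
  define x where "x = (p + KZ - pZ) / KZ"
  have x1: "x > 1" using assms by (simp add: x_def field_simps)
  define t where "t = sqrt x"
  have t1: "t \<ge> 1" using x1 by (simp add: t_def)
  have xt: "x = t^2" using x1 by (simp add: t_def)
  have pk: "p + KZ - pZ = KZ * t^2" using assms by (simp add: xt[symmetric] x_def)
  have c: "c_snd rhoZ KZ = sqrt (KZ / rhoZ)" by (simp add: c_snd_def)
  have e: "f_exp rhoZ pZ KZ p = sqrt (KZ / rhoZ) * (2 * ln t)"
  proof -
    have "(p + p_inf pZ KZ) / KZ = x" by (simp add: p_inf_def x_def)
    moreover have "ln x = 2 * ln t" using t1 by (simp add: xt ln_realpow)
    ultimately show ?thesis by (simp add: f_exp_def c_snd_def)
  qed
  have "rhoZ * (p + p_inf pZ KZ) = inverse (KZ / rhoZ) * (KZ * t)^2"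
    using assms pk by (simp add: p_inf_def field_simps power2_eq_square)
  hence s: "sqrt (rhoZ * (p + p_inf pZ KZ)) = KZ * t / sqrt (KZ / rhoZ)"
    using assms t1 by (simp add: real_sqrt_mult real_sqrt_divide divide_inverse real_sqrt_inverse)
  have pp: "p - pZ = KZ * (t^2 - 1)" using pk by (simp add: right_diff_distrib)
  have sh: "f_shock rhoZ pZ KZ p = sqrt (KZ / rhoZ) * (t - 1 / t)"
  proof -
    have cp: "sqrt (KZ / rhoZ) > 0" using assms by simp
    have "f_shock rhoZ pZ KZ p = KZ * (t^2 - 1) / (KZ * t / sqrt (KZ / rhoZ))"
      unfolding f_shock_def s pp ..
    also have "... = sqrt (KZ / rhoZ) * (t - 1 / t)"
      using cp assms t1 by (simp add: field_simps power2_eq_square)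
    finally show ?thesis .
  qed
  show ?thesis unfolding sh e
    using key[OF t1] assms by (intro mult_left_mono) auto
qed

end
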